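(* For any real continuous function $f\in C(\Omega)$, $$\|[\mathcal D,\pi(M_f)]\|=\Big|\sqrt{L|Kf-f|^2}\Big|_\infty=\sup_{x\in\Omega}\sqrt{\frac{|f(x)-f(0x)|^2}{2}+\frac{|f(x)-f(1x)|^2}{2}}.$$
   Context: $\Omega=\{0,1\}^{\mathbb N}$ with the shift $\sigma$; for $a\in\{0,1\}$, $ax=(a,x_1,x_2,\dots)$. $\mu$ is the measure of maximal entropy (uniform Bernoulli product measure), $L^2(\mu)$ the Hilbert space of square-integrable functions. $|\cdot|_\infty$ is the supremum norm. Ruelle operator $L\phi(x)=\frac12(\phi(0x)+\phi(1x))$; Koopman operator $K\phi=\phi\circ\sigma$. For $f\in C(\Omega)$, $M_f$ is multiplication $g\mapsto fg$ on $L^2(\mu)$. On $\mathcal H=L^2(\mu)\times L^2(\mu)$ (norm $|(\phi_1,\phi_2)|^2=|\phi_1|^2+|\phi_2|^2$), $\mathcal D=\begin{pmatrix}0&K\\ L&0\end{pmatrix}$ and $\pi(A)=\begin{pmatrix}A&0\\0&A\end{pmatrix}$; $[\mathcal D,\pi(A)]=\mathcal D\pi(A)-\pi(A)\mathcal D$. $\|\cdot\|$ is the operator norm. *)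

theory Defs
  imports "HOL-Probability.Probability"
begin

text \<open>Omega = {0,1}^N modelled as nat => bool; digit 0 is False, digit 1 is True;
  x_1 is x 0.\<close>
type_synonym omega = "nat \<Rightarrow> bool"

definition shift :: "omega \<Rightarrow> omega" where
  "shift x = (\<lambda>n. x (Suc n))"

definition cons_digit :: "bool \<Rightarrow> omega \<Rightarrow> omega" where
  "cons_digit a x = (\<lambda>n. case n of 0 \<Rightarrow> a | Suc m \<Rightarrow> x m)"

definition Omega_top :: "omega topology" where
  "Omega_top = product_topology (\<lambda>_. discrete_topology (UNIV :: bool set)) UNIV"

definition mu :: "omega measure" where
  "mu = (\<Pi>\<^sub>M n\<in>UNIV. measure_pmf (bernoulli_pmf (1/2)))"

definition L2 :: "(omega \<Rightarrow> real) set" where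
  "L2 = {\<phi>. \<phi> \<in> borel_measurable mu \<and> integrable mu (\<lambda>x. (\<phi> x)\<^sup>2)}"

definition L2_norm :: "(omega \<Rightarrow> real) \<Rightarrow> real" where
  "L2_norm \<phi> = sqrt (\<integral>x. (\<phi> x)\<^sup>2 \<partial>mu)"

definition Ruelle :: "(omega \<Rightarrow> real) \<Rightarrow> (omega \<Rightarrow> real)" where
  "Ruelle \<phi> = (\<lambda>x. (\<phi> (cons_digit False x) + \<phi> (cons_digit True x)) / 2)"

definition Koopman :: "(omega \<Rightarrow> real) \<Rightarrow> (omega \<Rightarrow> real)" where
  "Koopman \<phi> = \<phi> \<circ> shift"

definition mult_op :: "(omega \<Rightarrow> real) \<Rightarrow> (omega \<Rightarrow> real) \<Rightarrow> (omega \<Rightarrow> real)" where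
  "mult_op f g = (\<lambda>x. f x * g x)"

definition H :: "((omega \<Rightarrow> real) \<times> (omega \<Rightarrow> real)) set" where
  "H = L2 \<times> L2"

definition H_norm :: "(omega \<Rightarrow> real) \<times> (omega \<Rightarrow> real) \<Rightarrow> real" where
  "H_norm p = sqrt ((L2_norm (fst p))\<^sup>2 + (L2_norm (snd p))\<^sup>2)"

text \<open>D = [[0, K], [L, 0]] and pi(A) = diag(A, A).\<close>
definition Dirac :: "(omega \<Rightarrow> real) \<times> (omega \<Rightarrow> real) \<Rightarrow> (omega \<Rightarrow> real) \<times> (omega \<Rightarrow> real)" where
  "Dirac p = (Koopman (snd p), Ruelle (fst p))"

definition rep :: "((omega \<Rightarrow> real) \<Rightarrow> (omega \<Rightarrow> real))
    \<Rightarrow> (omega \<Rightarrow> real) \<times> (omega \<Rightarrow> real) \<Rightarrow> (omega \<Rightarrow> real) \<times> (omega \<Rightarrow> real)" where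
  "rep A p = (A (fst p), A (snd p))"

definition commutator ::
  "((omega \<Rightarrow> real) \<times> (omega \<Rightarrow> real) \<Rightarrow> (omega \<Rightarrow> real) \<times> (omega \<Rightarrow> real))
   \<Rightarrow> ((omega \<Rightarrow> real) \<times> (omega \<Rightarrow> real) \<Rightarrow> (omega \<Rightarrow> real) \<times> (omega \<Rightarrow> real))
   \<Rightarrow> (omega \<Rightarrow> real) \<times> (omega \<Rightarrow> real) \<Rightarrow> (omega \<Rightarrow> real) \<times> (omega \<Rightarrow> real)" where
  "commutator S T p = (let a = S (T p); b = T (S p) in (fst a - fst b, snd a - snd b))"

definition op_norm ::
  "((omega \<Rightarrow> real) \<times> (omega \<Rightarrow> real) \<Rightarrow> (omega \<Rightarrow> real) \<times> (omega \<Rightarrow> real)) \<Rightarrow> real" where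
  "op_norm T = Sup {H_norm (T p) | p. p \<in> H \<and> H_norm p \<le> 1}"

end

theory Submission
  imports Defs
begin

instance bool :: second_countable_topology
proof
  show "\<exists>B::bool set set. countable B \<and> open = generate_topology B"
  proof (intro exI conjI)
    show "countable (UNIV :: bool set set)" by simp
    show "open = generate_topology (UNIV :: bool set set)"
    proof (intro ext iffI)
      fix S :: "bool set" assume "open S" then show "generate_topology UNIV S" by (intro generate_topology.Basis) auto
    next
      fix S :: "bool set" assume "generate_topology UNIV S" show "open S" by (rule discrete_topology_class.open_discrete)
    qed
  qed
qed

abbreviation "BM \<equiv> measure_pmf (bernoulli_pmf (1/2))"

lemma sets_mu: "sets mu = sets (borel :: omega measure)"
proof -
  have "sets mu = sets (Pi\<^sub>M UNIV (\<lambda>i::nat. borel :: bool measure))"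
    unfolding mu_def by (intro sets_PiM_cong) (auto simp: sets_borel_eq_count_space)
  also have "\<dots> = sets borel" by (rule sets_PiM_equal_borel)
  finally show ?thesis .
qed

lemma Omega_top_eq: "Omega_top = (euclidean :: omega topology)"
proof -
  have "discrete_topology (UNIV::bool set) = euclidean"
    by (auto simp: topology_eq discrete_topology_class.open_discrete)
  then show ?thesis unfolding Omega_top_def using euclidean_product_topology by metis
qed

lemma space_mu[simp]: "space mu = UNIV"
  unfolding mu_def by (simp add: space_PiM)

lemma meas_shift[measurable]: "shift \<in> measurable mu mu"
  unfolding shift_def mu_def
  by (rule measurable_PiM_single') (auto simp: space_PiM)

lemma meas_cons[measurable]: "cons_digit a \<in> measurable mu mu"
  unfolding cons_digit_def mu_def
  apply (rule measurable_PiM_single')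
  subgoal for i by (cases i) auto
  by (auto simp: space_PiM)

lemma cons_case: "cons_digit a x = case_nat a x"
  unfolding cons_digit_def by (auto split: nat.split)

lemma shift_cons[simp]: "shift (cons_digit a x) = x"
  unfolding cons_digit_def shift_def by auto

lemma L_inv:
  fixes h :: "omega \<Rightarrow> ennreal"
  assumes [measurable]: "h \<in> borel_measurable mu"
  shows "(\<integral>\<^sup>+x. h x \<partial>mu) = (\<integral>\<^sup>+x. (h (cons_digit False x) + h (cons_digit True x)) / 2 \<partial>mu)"
proof -
  interpret S: sequence_space BM by unfold_locales (simp add: prob_space_measure_pmf)
  interpret P: pair_sigma_finite BM "\<Pi>\<^sub>M i::nat\<in>UNIV. BM" ..
  have hm[measurable]: "h \<in> borel_measurable S.S" using assms unfolding mu_def .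
  have "(\<integral>\<^sup>+x. h x \<partial>mu) = (\<integral>\<^sup>+X. h ((\<lambda>(s, \<omega>). case_nat s \<omega>) X) \<partial>(BM \<Otimes>\<^sub>M S.S))"
    unfolding mu_def by (subst S.PiM_iter[symmetric]) (simp add: nn_integral_distr)
  also have "\<dots> = (\<integral>\<^sup>+a. \<integral>\<^sup>+X. h ((\<lambda>(s, \<omega>). case_nat s \<omega>) (a, X)) \<partial>S.S \<partial>BM)"
    by (subst S.nn_integral_fst) simp_all
  also have "\<dots> = (\<integral>\<^sup>+a. \<integral>\<^sup>+X. h (case_nat a X) \<partial>S.S \<partial>BM)"
    by simp
  also have "\<dots> = (\<integral>\<^sup>+X. h (case_nat False X) \<partial>S.S) / 2 + (\<integral>\<^sup>+X. h (case_nat True X) \<partial>S.S) / 2"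
    by (subst nn_integral_measure_pmf_finite) (auto simp: UNIV_bool divide_ennreal_def add.commute)
  also have "\<dots> = (\<integral>\<^sup>+x. (h (cons_digit False x) + h (cons_digit True x)) / 2 \<partial>mu)"
    unfolding cons_case mu_def
    by (simp add: nn_integral_add nn_integral_divide add_divide_distrib_ennreal)
  finally show ?thesis .
qed

lemma ennhalf: "0 \<le> a \<Longrightarrow> 0 \<le> b \<Longrightarrow> (ennreal a + ennreal b) / 2 = ennreal ((a + b) / 2)"
proof -
  assume "0 \<le> a" "0 \<le> b"
  then have "ennreal a + ennreal b = ennreal (a + b)" by (rule ennreal_plus[symmetric])
  moreover have "ennreal (a + b) / 2 = ennreal ((a + b) / 2)"
    using divide_ennreal[of "a + b" 2] \<open>0 \<le> a\<close> \<open>0 \<le> b\<close> by simp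
  ultimately show ?thesis by simp
qed

lemma L2_nn: "p \<in> L2 \<Longrightarrow> (\<integral>\<^sup>+x. ennreal ((p x)\<^sup>2) \<partial>mu) = ennreal (\<integral>x. (p x)\<^sup>2 \<partial>mu)"
  unfolding L2_def by (intro nn_integral_eq_integral) auto

lemma int_le_from_nn:
  fixes q :: "omega \<Rightarrow> real"
  assumes "q \<in> borel_measurable mu" "\<And>x. 0 \<le> q x" "(\<integral>\<^sup>+x. ennreal (q x) \<partial>mu) \<le> ennreal c" "0 \<le> c"
  shows "(\<integral>x. q x \<partial>mu) \<le> c"
proof -
  have "(\<integral>x. q x \<partial>mu) = enn2real (\<integral>\<^sup>+x. ennreal (q x) \<partial>mu)"
    using assms by (intro integral_eq_nn_integral) auto
  also have "\<dots> \<le> enn2real (ennreal c)"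
    using assms(3) by (intro enn2real_mono) auto
  finally show ?thesis using assms(4) by simp
qed

lemma CS2: "(((a::real) * b + c * d) / 2)\<^sup>2 \<le> ((a\<^sup>2 + c\<^sup>2) / 2) * ((b\<^sup>2 + d\<^sup>2) / 2)"
proof -
  have e: "(a\<^sup>2 + c\<^sup>2) * (b\<^sup>2 + d\<^sup>2) - (a * b + c * d)\<^sup>2 = (a * d - c * b)\<^sup>2"
    by (simp add: power2_eq_square algebra_simps)
  have "0 \<le> (a * d - c * b)\<^sup>2" by simp
  then have "(a * b + c * d)\<^sup>2 \<le> (a\<^sup>2 + c\<^sup>2) * (b\<^sup>2 + d\<^sup>2)" using e by linarith
  then show ?thesis by (simp add: power_divide)
qed
lemma ptw: "(ennreal ((a * p)\<^sup>2) + ennreal ((b * p)\<^sup>2)) / 2 = ennreal ((\<bar>a\<bar>\<^sup>2 + \<bar>b::real\<bar>\<^sup>2) / 2 * p\<^sup>2)"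
proof -
  have "(ennreal ((a * p)\<^sup>2) + ennreal ((b * p)\<^sup>2)) / 2 = ennreal (((a * p)\<^sup>2 + (b * p)\<^sup>2) / 2)"
    by (rule ennhalf) auto
  also have "((a * p)\<^sup>2 + (b * p)\<^sup>2) / 2 = (\<bar>a\<bar>\<^sup>2 + \<bar>b\<bar>\<^sup>2) / 2 * p\<^sup>2"
    by (simp add: power_mult_distrib algebra_simps)
  finally show ?thesis .
qed

lemma upper1:
  assumes fm[measurable]: "f \<in> borel_measurable mu"
    and Gb: "\<And>x. (\<bar>f x - f (cons_digit False x)\<bar>\<^sup>2 + \<bar>f x - f (cons_digit True x)\<bar>\<^sup>2) / 2 \<le> Bsq"
    and Bp: "0 \<le> Bsq" and p2: "p2 \<in> L2"
  shows "(\<integral>x. ((f (shift x) - f x) * p2 (shift x))\<^sup>2 \<partial>mu) \<le> Bsq * (\<integral>x. (p2 x)\<^sup>2 \<partial>mu)"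
proof -
  have [measurable]: "p2 \<in> borel_measurable mu" using p2 unfolding L2_def by auto
  have "(\<integral>\<^sup>+x. ennreal (((f (shift x) - f x) * p2 (shift x))\<^sup>2) \<partial>mu)
      = (\<integral>\<^sup>+x. (ennreal (((f (shift (cons_digit False x)) - f (cons_digit False x)) * p2 (shift (cons_digit False x)))\<^sup>2)
              + ennreal (((f (shift (cons_digit True x)) - f (cons_digit True x)) * p2 (shift (cons_digit True x)))\<^sup>2)) / 2 \<partial>mu)"
    by (rule L_inv) measurable
  also have "\<dots> = (\<integral>\<^sup>+x. ennreal ((\<bar>f x - f (cons_digit False x)\<bar>\<^sup>2 + \<bar>f x - f (cons_digit True x)\<bar>\<^sup>2) / 2 * (p2 x)\<^sup>2) \<partial>mu)"
    by (intro nn_integral_cong) (simp add: ptw)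
  also have "\<dots> \<le> (\<integral>\<^sup>+x. ennreal (Bsq * (p2 x)\<^sup>2) \<partial>mu)"
    by (intro nn_integral_mono ennreal_leI mult_right_mono Gb) simp
  also have "\<dots> = ennreal Bsq * (\<integral>\<^sup>+x. ennreal ((p2 x)\<^sup>2) \<partial>mu)"
    using Bp by (simp add: ennreal_mult nn_integral_cmult)
  also have "\<dots> = ennreal (Bsq * (\<integral>x. (p2 x)\<^sup>2 \<partial>mu))"
    using Bp p2 by (simp add: L2_nn ennreal_mult)
  finally show ?thesis
    using Bp by (intro int_le_from_nn) auto
qed

lemma upper2:
  assumes fm[measurable]: "f \<in> borel_measurable mu"
    and Gb: "\<And>x. (\<bar>f x - f (cons_digit False x)\<bar>\<^sup>2 + \<bar>f x - f (cons_digit True x)\<bar>\<^sup>2) / 2 \<le> Bsq"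
    and Bp: "0 \<le> Bsq" and p1: "p1 \<in> L2"
  shows "(\<integral>x. (((f (cons_digit False x) - f x) * p1 (cons_digit False x)
                 + (f (cons_digit True x) - f x) * p1 (cons_digit True x)) / 2)\<^sup>2 \<partial>mu)
         \<le> Bsq * (\<integral>x. (p1 x)\<^sup>2 \<partial>mu)"
proof -
  have [measurable]: "p1 \<in> borel_measurable mu" using p1 unfolding L2_def by auto
  have pt: "(((f (cons_digit False x) - f x) * p1 (cons_digit False x)
                 + (f (cons_digit True x) - f x) * p1 (cons_digit True x)) / 2)\<^sup>2
        \<le> Bsq * (((p1 (cons_digit False x))\<^sup>2 + (p1 (cons_digit True x))\<^sup>2) / 2)" for x
  proof -
    have "(((f (cons_digit False x) - f x) * p1 (cons_digit False x)
                 + (f (cons_digit True x) - f x) * p1 (cons_digit True x)) / 2)\<^sup>2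
        \<le> (((f (cons_digit False x) - f x))\<^sup>2 + ((f (cons_digit True x) - f x))\<^sup>2) / 2
           * (((p1 (cons_digit False x))\<^sup>2 + (p1 (cons_digit True x))\<^sup>2) / 2)"
      by (rule CS2)
    also have "\<dots> \<le> Bsq * (((p1 (cons_digit False x))\<^sup>2 + (p1 (cons_digit True x))\<^sup>2) / 2)"
      using Gb[of x] by (intro mult_right_mono) (auto simp: power2_commute)
    finally show ?thesis .
  qed
  have "(\<integral>\<^sup>+x. ennreal ((((f (cons_digit False x) - f x) * p1 (cons_digit False x)
                 + (f (cons_digit True x) - f x) * p1 (cons_digit True x)) / 2)\<^sup>2) \<partial>mu)
      \<le> (\<integral>\<^sup>+x. ennreal (Bsq * (((p1 (cons_digit False x))\<^sup>2 + (p1 (cons_digit True x))\<^sup>2) / 2)) \<partial>mu)"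
    by (intro nn_integral_mono ennreal_leI pt)
  also have "\<dots> = (\<integral>\<^sup>+x. ennreal Bsq * ennreal (((p1 (cons_digit False x))\<^sup>2 + (p1 (cons_digit True x))\<^sup>2) / 2) \<partial>mu)"
    using Bp by (intro nn_integral_cong, subst ennreal_mult) auto
  also have "\<dots> = ennreal Bsq * (\<integral>\<^sup>+x. ennreal (((p1 (cons_digit False x))\<^sup>2 + (p1 (cons_digit True x))\<^sup>2) / 2) \<partial>mu)"
    by (rule nn_integral_cmult) measurable
  also have "(\<integral>\<^sup>+x. ennreal (((p1 (cons_digit False x))\<^sup>2 + (p1 (cons_digit True x))\<^sup>2) / 2) \<partial>mu)
      = (\<integral>\<^sup>+x. (ennreal ((p1 (cons_digit False x))\<^sup>2) + ennreal ((p1 (cons_digit True x))\<^sup>2)) / 2 \<partial>mu)"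
    by (intro nn_integral_cong) (simp add: ennhalf)
  also have "\<dots> = (\<integral>\<^sup>+x. ennreal ((p1 x)\<^sup>2) \<partial>mu)"
    by (rule L_inv[symmetric]) measurable
  also have "ennreal Bsq * \<dots> = ennreal (Bsq * (\<integral>x. (p1 x)\<^sup>2 \<partial>mu))"
    using Bp p1 by (simp add: L2_nn ennreal_mult)
  finally show ?thesis
    using Bp by (intro int_le_from_nn) auto
qed


lemma cont_cons: "continuous_on UNIV (cons_digit a)"
proof (rule continuous_on_coordinatewise_then_product)
  fix i show "continuous_on UNIV (\<lambda>x. cons_digit a x i)"
    unfolding cons_digit_def by (cases i) (auto intro: continuous_on_product_coordinates)
qed

lemma bdd_f:
  assumes "continuous_map Omega_top euclideanreal f"
  shows "\<exists>K. \<forall>x. \<bar>f x\<bar> \<le> K"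
proof -
  have "compact_space Omega_top"
    unfolding Omega_top_def by (simp add: compact_space_product_topology compact_space_discrete_topology)
  then have "compactin Omega_top (topspace Omega_top)" by (simp add: compact_space_def)
  then have "compactin euclideanreal (f ` topspace Omega_top)"
    using assms by (rule image_compactin)
  then have "compact (range f)"
    by (simp add: compactin_euclidean_iff Omega_top_def topspace_product_topology)
  then have "bounded (range f)" by (rule compact_imp_bounded)
  then show ?thesis by (auto simp: bounded_iff)
qed

lemma cyl:
  assumes "open (U :: omega set)" "x0 \<in> U"
  shows "\<exists>n. {x. \<forall>i<n. x i = x0 i} \<subseteq> U"
proof -
  have o: "openin (product_topology (\<lambda>i. euclidean) UNIV) U"
    using assms(1) unfolding open_fun_def .
  obtain X where X: "x0 \<in> Pi\<^sub>E UNIV X" "finite {i. X i \<noteq> topspace euclidean}" "Pi\<^sub>E UNIV X \<subseteq> U"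
    using product_topology_open_contains_basis[OF o assms(2)] by (elim exE conjE) 
  have fin: "finite {i. X i \<noteq> UNIV}" using X(2) by (simp only: topspace_euclidean)
  obtain n where n: "{i. X i \<noteq> UNIV} \<subseteq> {..<n}" using finite_nat_bounded[OF fin] by (elim exE)
  have "{x. \<forall>i<n. x i = x0 i} \<subseteq> Pi\<^sub>E UNIV X"
  proof
    fix x assume x: "x \<in> {x. \<forall>i<n. x i = x0 i}"
    have "x i \<in> X i" for i
    proof (cases "i < n")
      case True
      then have "x i = x0 i" using x by simp
      moreover have "x0 i \<in> X i" using X(1) by (simp add: PiE_iff)
      ultimately show ?thesis by simp
    next
      case False
      then have "i \<notin> {i. X i \<noteq> UNIV}" using n by (auto simp: subset_iff)
      then have "X i = UNIV" by simp
      then show ?thesis by simp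
    qed
    then show "x \<in> Pi\<^sub>E UNIV X" by (simp add: PiE_iff)
  qed
  then have "{x. \<forall>i<n. x i = x0 i} \<subseteq> U" using X(3) by (rule order_trans)
  then show ?thesis by (rule exI)
qed

lemma prob_mu: "prob_space mu"
  unfolding mu_def by (rule prob_space_PiM) (simp add: prob_space_measure_pmf)

lemma fin_mu: "finite_measure mu"
  using prob_mu unfolding prob_space_def by simp

lemma cyl_sets: "{x. \<forall>i<n. x i = x0 i} \<in> sets mu"
proof -
  have "{x. \<forall>i<n. x i = x0 i} = {x\<in>space mu. \<forall>i\<in>{..<n}. x i \<in> {x0 i}}" by auto
  also have "\<dots> \<in> sets mu" unfolding mu_def
    by (intro sets.sets_Collect_finite_All) (auto intro!: measurable_sets[OF measurable_component_singleton, where S="{x0 _}", simplified])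
  finally show ?thesis .
qed

lemma cyl_meas: "emeasure mu {x. \<forall>i<n. x i = x0 i} = ennreal ((1/2)^n)"
proof -
  interpret product_prob_space "\<lambda>_. BM" UNIV by unfold_locales (simp add: prob_space_measure_pmf)
  have "{x. \<forall>i<n. x i = x0 i} = {x\<in>space mu. \<forall>i\<in>{..<n}. x i \<in> {x0 i}}" by auto
  also have "emeasure mu \<dots> = (\<Prod>i\<in>{..<n}. emeasure BM {x0 i})"
    unfolding mu_def by (rule emeasure_PiM_Collect) auto
  also have "\<dots> = (\<Prod>i\<in>{..<n}. ennreal (1/2))"
    by (intro prod.cong refl) (simp only: emeasure_pmf_single pmf_bernoulli_half)
  also have "\<dots> = ennreal ((1/2)^n)" by (simp only: prod_constant card_lessThan ennreal_power)
  finally show ?thesis .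
qed


lemma u1_nn:
  assumes fm[measurable]: "f \<in> borel_measurable mu" and [measurable]: "p2 \<in> borel_measurable mu"
  shows "(\<integral>\<^sup>+x. ennreal (((f (shift x) - f x) * p2 (shift x))\<^sup>2) \<partial>mu)
      = (\<integral>\<^sup>+x. ennreal ((\<bar>f x - f (cons_digit False x)\<bar>\<^sup>2 + \<bar>f x - f (cons_digit True x)\<bar>\<^sup>2) / 2 * (p2 x)\<^sup>2) \<partial>mu)"
proof -
  have "(\<integral>\<^sup>+x. ennreal (((f (shift x) - f x) * p2 (shift x))\<^sup>2) \<partial>mu)
      = (\<integral>\<^sup>+x. (ennreal (((f (shift (cons_digit False x)) - f (cons_digit False x)) * p2 (shift (cons_digit False x)))\<^sup>2)
              + ennreal (((f (shift (cons_digit True x)) - f (cons_digit True x)) * p2 (shift (cons_digit True x)))\<^sup>2)) / 2 \<partial>mu)"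
    by (rule L_inv) measurable
  also have "\<dots> = (\<integral>\<^sup>+x. ennreal ((\<bar>f x - f (cons_digit False x)\<bar>\<^sup>2 + \<bar>f x - f (cons_digit True x)\<bar>\<^sup>2) / 2 * (p2 x)\<^sup>2) \<partial>mu)"
    by (intro nn_integral_cong) (simp add: ptw)
  finally show ?thesis .
qed

lemma comm_eq:
  "commutator Dirac (rep (mult_op f)) p =
    (\<lambda>x. (f (shift x) - f x) * snd p (shift x),
     \<lambda>x. ((f (cons_digit False x) - f x) * fst p (cons_digit False x)
          + (f (cons_digit True x) - f x) * fst p (cons_digit True x)) / 2)"
  unfolding commutator_def Dirac_def rep_def mult_op_def Koopman_def Ruelle_def
  by (auto simp: fun_eq_iff algebra_simps add_divide_distrib diff_divide_distrib)

lemma L2_norm_sq: "(L2_norm u)\<^sup>2 = (\<integral>x. (u x)\<^sup>2 \<partial>mu)"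
  unfolding L2_norm_def by (simp add: integral_nonneg_AE)

lemma H_norm_sq: "(H_norm q)\<^sup>2 = (\<integral>x. (fst q x)\<^sup>2 \<partial>mu) + (\<integral>x. (snd q x)\<^sup>2 \<partial>mu)"
  unfolding H_norm_def by (simp add: L2_norm_sq[symmetric])

lemma H_norm_nn: "0 \<le> H_norm q" unfolding H_norm_def by simp


theorem proposition2p11:
  fixes f :: "omega \<Rightarrow> real"
  assumes "continuous_map Omega_top euclideanreal f"
  shows "op_norm (commutator Dirac (rep (mult_op f)))
           = (SUP x. \<bar>sqrt (Ruelle (\<lambda>y. \<bar>Koopman f y - f y\<bar>\<^sup>2) x)\<bar>)
       \<and> (SUP x. \<bar>sqrt (Ruelle (\<lambda>y. \<bar>Koopman f y - f y\<bar>\<^sup>2) x)\<bar>)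
           = (SUP x. sqrt (\<bar>f x - f (cons_digit False x)\<bar>\<^sup>2 / 2
                          + \<bar>f x - f (cons_digit True x)\<bar>\<^sup>2 / 2))"
proof -
  have cf: "continuous_on UNIV f"
    using assms by (simp add: Omega_top_eq continuous_map_iff_continuous2)
  have fm[measurable]: "f \<in> borel_measurable mu"
    by (subst measurable_cong_sets[OF sets_mu refl]) (rule borel_measurable_continuous_onI[OF cf])
  obtain K where K: "\<And>x. \<bar>f x\<bar> \<le> K" using bdd_f[OF assms] by blast
  define G where "G = (\<lambda>x. (\<bar>f x - f (cons_digit False x)\<bar>\<^sup>2 + \<bar>f x - f (cons_digit True x)\<bar>\<^sup>2) / 2)"
  have Gnn: "0 \<le> G x" for x unfolding G_def by simp
  have RG: "Ruelle (\<lambda>y. \<bar>Koopman f y - f y\<bar>\<^sup>2) x = G x" for x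
    unfolding Ruelle_def Koopman_def G_def by simp
  have Gbd: "G x \<le> (2 * K)\<^sup>2" for x
  proof -
    have a: "\<bar>f x - f y\<bar>\<^sup>2 \<le> (2 * K)\<^sup>2" for y
    proof -
      have "\<bar>f x - f y\<bar> \<le> 2 * K" using K[of x] K[of y] by linarith
      then show ?thesis by (intro power_mono) auto
    qed
    show ?thesis unfolding G_def using a[of "cons_digit False x"] a[of "cons_digit True x"] by simp
  qed
  have bdd: "bdd_above (range (\<lambda>x. sqrt (G x)))"
  proof (rule bdd_aboveI2)
    fix x show "sqrt (G x) \<le> sqrt ((2 * K)\<^sup>2)" using Gbd[of x] by (rule real_sqrt_le_mono)
  qed
  define B where "B = (SUP x. sqrt (G x))"
  have sqB: "sqrt (G x) \<le> B" for x unfolding B_def by (rule cSUP_upper[OF _ bdd]) simp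
  have B0: "0 \<le> B" using sqB[of undefined] by (meson order_trans real_sqrt_ge_zero Gnn)
  have GB: "G x \<le> B\<^sup>2" for x
  proof -
    have "(sqrt (G x))\<^sup>2 \<le> B\<^sup>2" using sqB[of x] Gnn[of x] by (intro power_mono) auto
    then show ?thesis using Gnn[of x] by simp
  qed
  have eq1: "(SUP x. \<bar>sqrt (Ruelle (\<lambda>y. \<bar>Koopman f y - f y\<bar>\<^sup>2) x)\<bar>) = B"
    unfolding B_def by (intro SUP_cong refl) (simp only: RG, simp add: Gnn)
  have eq2: "(SUP x. sqrt (\<bar>f x - f (cons_digit False x)\<bar>\<^sup>2 / 2 + \<bar>f x - f (cons_digit True x)\<bar>\<^sup>2 / 2)) = B"
    unfolding B_def by (intro SUP_cong refl) (simp add: G_def add_divide_distrib)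
  define T where "T = commutator Dirac (rep (mult_op f))"
  define S where "S = {H_norm (T p) | p. p \<in> H \<and> H_norm p \<le> 1}"
  have opS: "op_norm (commutator Dirac (rep (mult_op f))) = Sup S"
    unfolding op_norm_def S_def T_def ..
  have L20: "(\<lambda>x. 0) \<in> L2" unfolding L2_def by simp
  have upper: "H_norm (T p) \<le> B" if p: "p \<in> H" "H_norm p \<le> 1" for p
  proof -
    have p1: "fst p \<in> L2" and p2: "snd p \<in> L2" using p(1) unfolding H_def by auto
    have Gb': "(\<bar>f x - f (cons_digit False x)\<bar>\<^sup>2 + \<bar>f x - f (cons_digit True x)\<bar>\<^sup>2) / 2 \<le> B\<^sup>2" for x
      using GB[of x] unfolding G_def .
    have u1b: "(\<integral>x. ((f (shift x) - f x) * snd p (shift x))\<^sup>2 \<partial>mu) \<le> B\<^sup>2 * (\<integral>x. (snd p x)\<^sup>2 \<partial>mu)"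
      by (rule upper1[OF fm Gb' _ p2]) simp
    have u2b: "(\<integral>x. (((f (cons_digit False x) - f x) * fst p (cons_digit False x)
                 + (f (cons_digit True x) - f x) * fst p (cons_digit True x)) / 2)\<^sup>2 \<partial>mu)
         \<le> B\<^sup>2 * (\<integral>x. (fst p x)\<^sup>2 \<partial>mu)"
      by (rule upper2[OF fm Gb' _ p1]) simp
    have "(H_norm (T p))\<^sup>2 \<le> B\<^sup>2 * (\<integral>x. (snd p x)\<^sup>2 \<partial>mu) + B\<^sup>2 * (\<integral>x. (fst p x)\<^sup>2 \<partial>mu)"
      unfolding H_norm_sq T_def comm_eq fst_conv snd_conv
      by (rule add_mono[OF u1b u2b])
    also have "\<dots> = B\<^sup>2 * (H_norm p)\<^sup>2" by (simp add: H_norm_sq algebra_simps)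
    also have "\<dots> \<le> B\<^sup>2 * 1"
    proof -
      have "(H_norm p)\<^sup>2 \<le> 1" using p(2) H_norm_nn[of p] by (simp add: power_le_one)
      then show ?thesis by (intro mult_left_mono) auto
    qed
    finally have "(H_norm (T p))\<^sup>2 \<le> B\<^sup>2" by simp
    then show ?thesis using B0 H_norm_nn by (simp add: power2_le_iff_abs_le)
  qed
  have Sne: "S \<noteq> {}"
  proof -
    have "((\<lambda>x. 0), (\<lambda>x. 0)) \<in> H" unfolding H_def using L20 by simp
    moreover have "H_norm ((\<lambda>x. 0::real), (\<lambda>x. 0::real)) \<le> 1" unfolding H_norm_def L2_norm_def by simp
    ultimately show ?thesis unfolding S_def by blast
  qed
  have Sbdd: "bdd_above S" by (rule bdd_aboveI[where M=B]) (auto simp: S_def upper)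
  have le1: "Sup S \<le> B" using Sne upper by (intro cSup_least) (auto simp: S_def)
  have le2: "B \<le> Sup S"
  proof -
    have Sup0: "0 \<le> Sup S"
    proof -
      obtain z where "z \<in> S" using Sne by blast
      moreover then have "0 \<le> z" unfolding S_def using H_norm_nn by blast
      ultimately show ?thesis using cSup_upper[OF _ Sbdd, of z] by linarith
    qed
    have cfc: "continuous_on UNIV (\<lambda>x. f (cons_digit a x))" for a
      by (rule continuous_on_compose2[OF cf cont_cons]) auto
    have contG: "continuous_on UNIV G"
      unfolding G_def by (intro continuous_on_divide continuous_on_add continuous_on_power continuous_on_rabs continuous_on_diff cf cfc continuous_on_const) auto
    have Gm: "G \<in> borel_measurable mu"
      by (subst measurable_cong_sets[OF sets_mu refl]) (rule borel_measurable_continuous_onI[OF contG])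
    have key: "G x0 \<le> (Sup S)\<^sup>2" for x0
    proof (rule field_le_epsilon)
      fix e :: real assume e: "0 < e"
      define U where "U = G -` {G x0 - e <..}"
      have "open U" unfolding U_def by (rule open_vimage[OF _ contG]) simp
      moreover have "x0 \<in> U" using e by (simp add: U_def)
      ultimately obtain n where n: "{x. \<forall>i<n. x i = x0 i} \<subseteq> U" using cyl by blast
      define C where "C = {x::omega. \<forall>i<n. x i = x0 i}"
      have Cs[measurable]: "C \<in> sets mu" unfolding C_def by (rule cyl_sets)
      define m where "m = measure mu C"
      have m: "m = (1/2)^n" unfolding m_def C_def measure_def cyl_meas by simp
      have mpos: "0 < m" unfolding m by simp
      define p2 where "p2 x = indicator C x / sqrt m" for x :: omega
      have p2sq: "(p2 x)\<^sup>2 = indicator C x / m" for x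
        using mpos by (simp add: p2_def power_divide indicator_def)
      have p2m: "p2 \<in> borel_measurable mu" unfolding p2_def[abs_def]
        by (intro borel_measurable_divide borel_measurable_indicator Cs borel_measurable_const)
      have u1m: "(\<lambda>x. ((f (shift x) - f x) * p2 (shift x))\<^sup>2) \<in> borel_measurable mu"
        by (intro borel_measurable_power borel_measurable_times borel_measurable_diff fm
           measurable_compose[OF meas_shift fm] measurable_compose[OF meas_shift p2m])
      have Gp2m: "(\<lambda>x. G x * (p2 x)\<^sup>2) \<in> borel_measurable mu"
        by (intro borel_measurable_power borel_measurable_times Gm p2m)
      have Cfin: "emeasure mu C < \<infinity>" unfolding C_def cyl_meas by simp
      have intsq: "integrable mu (\<lambda>x. (p2 x)\<^sup>2)"
        unfolding p2sq by (intro integrable_divide integrable_real_indicator Cs Cfin)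
      have p2L: "p2 \<in> L2" unfolding L2_def using intsq p2m by simp
      have int1: "(\<integral>x. (p2 x)\<^sup>2 \<partial>mu) = 1"
        unfolding p2sq using mpos by (simp add: m_def)
      define p where "p = ((\<lambda>x::omega. 0::real), p2)"
      have pH: "p \<in> H" unfolding p_def H_def using L20 p2L by simp
      have pn: "H_norm p \<le> 1" unfolding p_def H_norm_def L2_norm_sq using int1 by simp
      have inS: "H_norm (T p) \<in> S" unfolding S_def using pH pn by blast
      have "(H_norm (T p))\<^sup>2 = (\<integral>x. ((f (shift x) - f x) * p2 (shift x))\<^sup>2 \<partial>mu)"
        unfolding H_norm_sq T_def comm_eq p_def by simp
      also have "\<dots> = enn2real (\<integral>\<^sup>+x. ennreal (((f (shift x) - f x) * p2 (shift x))\<^sup>2) \<partial>mu)"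
        by (intro integral_eq_nn_integral AE_I2 u1m) simp
      also have "\<dots> = enn2real (\<integral>\<^sup>+x. ennreal (G x * (p2 x)\<^sup>2) \<partial>mu)"
        unfolding u1_nn[OF fm p2m] G_def ..
      also have "\<dots> = (\<integral>x. G x * (p2 x)\<^sup>2 \<partial>mu)"
        by (intro integral_eq_nn_integral[symmetric] AE_I2 Gp2m) (simp add: Gnn)
      finally have hn: "(H_norm (T p))\<^sup>2 = (\<integral>x. G x * (p2 x)\<^sup>2 \<partial>mu)" .
      have "G x0 - e = (\<integral>x. (G x0 - e) * (p2 x)\<^sup>2 \<partial>mu)" using int1 by simp
      also have "\<dots> \<le> (\<integral>x. G x * (p2 x)\<^sup>2 \<partial>mu)"
      proof (rule integral_mono)
        show "integrable mu (\<lambda>x. (G x0 - e) * (p2 x)\<^sup>2)" using intsq by simp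
        have "AE x in mu. norm (G x * (p2 x)\<^sup>2) \<le> (2*K)\<^sup>2 * (1/m)"
        proof (intro AE_I2)
          fix x
          have "(p2 x)\<^sup>2 \<le> 1/m" unfolding p2sq using mpos by (simp add: indicator_def)
          then have "G x * (p2 x)\<^sup>2 \<le> (2*K)\<^sup>2 * (1/m)"
            by (rule mult_mono[OF Gbd[of x]]) auto
          then show "norm (G x * (p2 x)\<^sup>2) \<le> (2*K)\<^sup>2 * (1/m)"
            using Gnn[of x] by simp
        qed
        then show "integrable mu (\<lambda>x. G x * (p2 x)\<^sup>2)"
          by (rule finite_measure.integrable_const_bound[OF fin_mu _ Gp2m])
        fix x show "(G x0 - e) * (p2 x)\<^sup>2 \<le> G x * (p2 x)\<^sup>2"
        proof (cases "x \<in> C")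
          case True
          then have "x \<in> U" using n unfolding C_def by blast
          then have "G x0 - e \<le> G x" unfolding U_def by simp
          then show ?thesis by (intro mult_right_mono) auto
        next
          case False then show ?thesis by (simp add: p2_def)
        qed
      qed
      also have "\<dots> = (H_norm (T p))\<^sup>2" using hn by simp
      also have "\<dots> \<le> (Sup S)\<^sup>2"
        by (rule power_mono[OF cSup_upper[OF inS Sbdd] H_norm_nn])
      finally show "G x0 \<le> (Sup S)\<^sup>2 + e" by simp
    qed
    show ?thesis unfolding B_def
    proof (rule cSUP_least)
      fix x0
      have "sqrt (G x0) \<le> sqrt ((Sup S)\<^sup>2)" using key by (rule real_sqrt_le_mono)
      then show "sqrt (G x0) \<le> Sup S" using Sup0 by simp
    qed simp
  qed
  show ?thesis using le1 le2 eq1 eq2 opS by simp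
qed

end
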